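(* Let $(P,\le,\mu,\gamma)$ be an $S$-sieved preordered heap (for a semilattice $S$). Then the source multiplication $\mu$ on $P$ is monotonic in both arguments: for all $a,b,c\in P$, $a\le c$ implies $\mu(a,b)\le\mu(c,b)$ and $\mu(b,a)\le\mu(b,c)$.
   Context: A preordered heap is a structure $(Q,\le,\mu,\gamma)$ with $(Q,\le)$ a preorder, $\mu\colon Q\times Q\to Q$ monotonic in both arguments, $\gamma\colon Q\to Q$ antitone, satisfying $\gamma(\gamma a)=a$, $\mu(a,\gamma(\mu(\gamma b,a)))\le b$ and $\mu(\gamma(\mu(a,\gamma b)),a)\le b$ for all $a,b$. A homomorphism of preordered heaps $f\colon Q\to Q'$ is an order-preserving map with $f(\mu(a,b))=\mu'(fa,fb)$ and $f(\gamma a)=\gamma'(fa)$. Let $S$ be a semilattice (an associative, commutative, idempotent binary operation, written $xy$). Let $\{(P_x,\le_x,\mu_x,\gamma_x)\}_{x\in S}$ be preordered heaps such that for all $x,y\in S$ there is a unique preordered-heap homomorphism $\iota\colon P_x\to P_{xy}$ (a concretization), with the concretization $P_x\to P_x$ being the identity, and such that for all $x,y,z\in S$ the composite of the concretizations $P_x\to P_{xy}\to P_{xyz}$ equals the concretization $P_x\to P_{xyz}$. Let $P=\bigsqcup_{x\in S}P_x$ (disjoint union). For $a\in P_x$, $b\in P_y$ with concretizations $\iota_x\colon P_x\to P_{xy}$, $\iota_y\colon P_y\to P_{xy}$, define $\mu(a,b)=\mu_{xy}(\iota_x a,\iota_y b)$ and $\gamma(a)=\gamma_x(a)$; and define $a\le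 b$ iff there exist $z\in S$ and concretizations $\iota\colon P_x\to P_z$, $\iota'\colon P_y\to P_z$ with $\iota(a)\le_z\iota'(b)$. Then $(P,\le,\mu,\gamma)$ is called an $S$-sieved preordered heap. *)

theory Defs
  imports Main
begin

text \<open>A preordered heap on the carrier set C (relativised to a carrier, so that a
  whole family of heaps can live in one ambient type).\<close>
definition pheap :: "'a set \<Rightarrow> ('a \<Rightarrow> 'a \<Rightarrow> bool) \<Rightarrow> ('a \<Rightarrow> 'a \<Rightarrow> 'a) \<Rightarrow> ('a \<Rightarrow> 'a) \<Rightarrow> bool" where
  "pheap C le mu ga \<longleftrightarrow>
     (\<forall>a\<in>C. le a a) \<and>
     (\<forall>a\<in>C. \<forall>b\<in>C. \<forall>c\<in>C. le a b \<longrightarrow> le b c \<longrightarrow> le a c) \<and>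
     (\<forall>a\<in>C. \<forall>b\<in>C. mu a b \<in> C) \<and>
     (\<forall>a\<in>C. ga a \<in> C) \<and>
     (\<forall>a\<in>C. \<forall>a'\<in>C. \<forall>b\<in>C. le a a' \<longrightarrow> le (mu a b) (mu a' b)) \<and>
     (\<forall>a\<in>C. \<forall>b\<in>C. \<forall>b'\<in>C. le b b' \<longrightarrow> le (mu a b) (mu a b')) \<and>
     (\<forall>a\<in>C. \<forall>b\<in>C. le a b \<longrightarrow> le (ga b) (ga a)) \<and>
     (\<forall>a\<in>C. ga (ga a) = a) \<and>
     (\<forall>a\<in>C. \<forall>b\<in>C. le (mu a (ga (mu (ga b) a))) b) \<and>
     (\<forall>a\<in>C. \<forall>b\<in>C. le (mu (ga (mu a (ga b))) a) b)"

definition pheap_hom ::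
  "'a set \<Rightarrow> ('a \<Rightarrow> 'a \<Rightarrow> bool) \<Rightarrow> ('a \<Rightarrow> 'a \<Rightarrow> 'a) \<Rightarrow> ('a \<Rightarrow> 'a) \<Rightarrow>
   'a set \<Rightarrow> ('a \<Rightarrow> 'a \<Rightarrow> bool) \<Rightarrow> ('a \<Rightarrow> 'a \<Rightarrow> 'a) \<Rightarrow> ('a \<Rightarrow> 'a) \<Rightarrow> ('a \<Rightarrow> 'a) \<Rightarrow> bool" where
  "pheap_hom C le mu ga C' le' mu' ga' f \<longleftrightarrow>
     (\<forall>a\<in>C. f a \<in> C') \<and>
     (\<forall>a\<in>C. \<forall>b\<in>C. le a b \<longrightarrow> le' (f a) (f b)) \<and>
     (\<forall>a\<in>C. \<forall>b\<in>C. f (mu a b) = mu' (f a) (f b)) \<and>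
     (\<forall>a\<in>C. f (ga a) = ga' (f a))"

definition sieved_data ::
  "('s \<Rightarrow> 's \<Rightarrow> 's) \<Rightarrow> ('s \<Rightarrow> 'a set) \<Rightarrow> ('s \<Rightarrow> 'a \<Rightarrow> 'a \<Rightarrow> bool) \<Rightarrow>
   ('s \<Rightarrow> 'a \<Rightarrow> 'a \<Rightarrow> 'a) \<Rightarrow> ('s \<Rightarrow> 'a \<Rightarrow> 'a) \<Rightarrow> ('s \<Rightarrow> 's \<Rightarrow> 'a \<Rightarrow> 'a) \<Rightarrow> bool" where
  "sieved_data m C le mu ga iota \<longleftrightarrow>
     semilattice m \<and>
     (\<forall>x. pheap (C x) (le x) (mu x) (ga x)) \<and>
     (\<forall>x y. pheap_hom (C x) (le x) (mu x) (ga x) (C (m x y)) (le (m x y)) (mu (m x y)) (ga (m x y)) (iota x y)) \<and>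
     (\<forall>x y f. pheap_hom (C x) (le x) (mu x) (ga x) (C (m x y)) (le (m x y)) (mu (m x y)) (ga (m x y)) f
              \<longrightarrow> (\<forall>a\<in>C x. f a = iota x y a)) \<and>
     (\<forall>x. \<forall>a\<in>C x. iota x x a = a) \<and>
     (\<forall>x y z. \<forall>a\<in>C x. iota (m x y) z (iota x y a) = iota x (m y z) a)"

definition sieved_carrier :: "('s \<Rightarrow> 'a set) \<Rightarrow> ('s \<times> 'a) set" where
  "sieved_carrier C = Sigma UNIV C"

definition sieved_mu ::
  "('s \<Rightarrow> 's \<Rightarrow> 's) \<Rightarrow> ('s \<Rightarrow> 'a \<Rightarrow> 'a \<Rightarrow> 'a) \<Rightarrow> ('s \<Rightarrow> 's \<Rightarrow> 'a \<Rightarrow> 'a) \<Rightarrow>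
   ('s \<times> 'a) \<Rightarrow> ('s \<times> 'a) \<Rightarrow> ('s \<times> 'a)" where
  "sieved_mu m mu iota p q =
     (case p of (x, a) \<Rightarrow> case q of (y, b) \<Rightarrow>
        (m x y, mu (m x y) (iota x y a) (iota y x b)))"

definition sieved_ga :: "('s \<Rightarrow> 'a \<Rightarrow> 'a) \<Rightarrow> ('s \<times> 'a) \<Rightarrow> ('s \<times> 'a)" where
  "sieved_ga ga p = (case p of (x, a) \<Rightarrow> (x, ga x a))"

text \<open>(x,a) \<le> (y,b) iff there are z and concretizations P_x \<rightarrow> P_z, P_y \<rightarrow> P_z
  comparing the images; concretizations into P_z exist exactly for z = x w = y w'.\<close>
definition sieved_le ::
  "('s \<Rightarrow> 's \<Rightarrow> 's) \<Rightarrow> ('s \<Rightarrow> 'a \<Rightarrow> 'a \<Rightarrow> bool) \<Rightarrow> ('s \<Rightarrow> 's \<Rightarrow> 'a \<Rightarrow> 'a) \<Rightarrow>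
   ('s \<times> 'a) \<Rightarrow> ('s \<times> 'a) \<Rightarrow> bool" where
  "sieved_le m le iota p q =
     (case p of (x, a) \<Rightarrow> case q of (y, b) \<Rightarrow>
        (\<exists>w w'. m x w = m y w' \<and> le (m x w) (iota x w a) (iota y w' b)))"

end

theory Submission
  imports Defs
begin

theorem lemma2:
  fixes m :: "'s \<Rightarrow> 's \<Rightarrow> 's" and C :: "'s \<Rightarrow> 'a set"
    and le :: "'s \<Rightarrow> 'a \<Rightarrow> 'a \<Rightarrow> bool" and mu :: "'s \<Rightarrow> 'a \<Rightarrow> 'a \<Rightarrow> 'a"
    and ga :: "'s \<Rightarrow> 'a \<Rightarrow> 'a" and iota :: "'s \<Rightarrow> 's \<Rightarrow> 'a \<Rightarrow> 'a"
  assumes "sieved_data m C le mu ga iota"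
    and "p \<in> sieved_carrier C" and "q \<in> sieved_carrier C" and "r \<in> sieved_carrier C"
    and "sieved_le m le iota p r"
  shows "sieved_le m le iota (sieved_mu m mu iota p q) (sieved_mu m mu iota r q)
       \<and> sieved_le m le iota (sieved_mu m mu iota q p) (sieved_mu m mu iota q r)"
proof -
  have sl: "semilattice m" and ph: "\<And>x. pheap (C x) (le x) (mu x) (ga x)"
    and hom: "\<And>x y. pheap_hom (C x) (le x) (mu x) (ga x) (C (m x y)) (le (m x y)) (mu (m x y)) (ga (m x y)) (iota x y)"
    and comp: "\<And>x y z a. a \<in> C x \<Longrightarrow> iota (m x y) z (iota x y a) = iota x (m y z) a"
    using assms(1) unfolding sieved_data_def by auto
  interpret semilattice m by (rule sl)
  have hin: "\<And>x y a. a \<in> C x \<Longrightarrow> iota x y a \<in> C (m x y)"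
    using hom unfolding pheap_hom_def by blast
  have hle: "\<And>x y a b. a \<in> C x \<Longrightarrow> b \<in> C x \<Longrightarrow> le x a b \<Longrightarrow> le (m x y) (iota x y a) (iota x y b)"
    using hom unfolding pheap_hom_def by blast
  have hmu: "\<And>x y a b. a \<in> C x \<Longrightarrow> b \<in> C x \<Longrightarrow> iota x y (mu x a b) = mu (m x y) (iota x y a) (iota x y b)"
    using hom unfolding pheap_hom_def by blast
  have mono1: "\<And>x a a' b. a \<in> C x \<Longrightarrow> a' \<in> C x \<Longrightarrow> b \<in> C x \<Longrightarrow> le x a a' \<Longrightarrow> le x (mu x a b) (mu x a' b)"
  proof -
    fix x a a' b assume h: "a \<in> C x" "a' \<in> C x" "b \<in> C x" "le x a a'"
    have "\<forall>a\<in>C x. \<forall>a'\<in>C x. \<forall>b\<in>C x. le x a a' \<longrightarrow> le x (mu x a b) (mu x a' b)"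
      using ph[of x] unfolding pheap_def by (elim conjE) assumption
    then show "le x (mu x a b) (mu x a' b)" using h by simp
  qed
  have mono2: "\<And>x a b b'. a \<in> C x \<Longrightarrow> b \<in> C x \<Longrightarrow> b' \<in> C x \<Longrightarrow> le x b b' \<Longrightarrow> le x (mu x a b) (mu x a b')"
  proof -
    fix x a b b' assume h: "a \<in> C x" "b \<in> C x" "b' \<in> C x" "le x b b'"
    have "\<forall>a\<in>C x. \<forall>b\<in>C x. \<forall>b'\<in>C x. le x b b' \<longrightarrow> le x (mu x a b) (mu x a b')"
      using ph[of x] unfolding pheap_def by (elim conjE) assumption
    then show "le x (mu x a b) (mu x a b')" using h by simp
  qed
  obtain x a where p: "p = (x, a)" and a: "a \<in> C x" using assms(2) unfolding sieved_carrier_def by auto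
  obtain u b where q: "q = (u, b)" and b: "b \<in> C u" using assms(3) unfolding sieved_carrier_def by auto
  obtain y c where r: "r = (y, c)" and c: "c \<in> C y" using assms(4) unfolding sieved_carrier_def by auto
  obtain w w' where ww: "m x w = m y w'" and le0: "le (m x w) (iota x w a) (iota y w' c)"
    using assms(5) unfolding sieved_le_def p r by auto
  define z where "z = m x w"
  have zy: "z = m y w'" using ww z_def by simp
  have A: "iota x w a \<in> C z" using hin[OF a] z_def by simp
  have Cc: "iota y w' c \<in> C z" using hin[OF c] zy by simp
  have le1: "le (m z u) (iota z u (iota x w a)) (iota z u (iota y w' c))"
    using hle[OF A Cc] le0 z_def by simp
  have ea: "iota z u (iota x w a) = iota x (m w u) a" using comp[OF a] z_def by simp
  have ec: "iota z u (iota y w' c) = iota y (m w' u) c" using comp[OF c] zy by simp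
  have le2: "le (m z u) (iota x (m w u) a) (iota y (m w' u) c)" using le1 ea ec by simp
  have ax: "iota x (m w u) a \<in> C (m z u)" using hin[OF a, of "m w u"] z_def by (simp add: assoc)
  have cx: "iota y (m w' u) c \<in> C (m z u)" using hin[OF c, of "m w' u"] zy by (simp add: assoc)
  have bx: "iota u z b \<in> C (m z u)" using hin[OF b, of z] by (simp add: commute)
  have i1: "iota (m x u) w (iota x u a) = iota x (m w u) a" using comp[OF a] by (simp add: commute)
  have i2: "iota (m y u) w' (iota y u c) = iota y (m w' u) c" using comp[OF c] by (simp add: commute)
  have i3: "iota (m x u) w (iota u x b) = iota u z b"
    using comp[OF b, of x w] z_def by (simp add: commute)
  have i4: "iota (m y u) w' (iota u y b) = iota u z b"
    using comp[OF b, of y w'] zy by (simp add: commute)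
  have i5: "iota (m u x) w (iota u x b) = iota u z b" using comp[OF b, of x w] z_def by simp
  have i6: "iota (m u y) w' (iota u y b) = iota u z b" using comp[OF b, of y w'] zy by simp
  have i7: "iota (m u x) w (iota x u a) = iota x (m w u) a"
    using comp[OF a, of u w] by (simp add: commute)
  have i8: "iota (m u y) w' (iota y u c) = iota y (m w' u) c"
    using comp[OF c, of u w'] by (simp add: commute)
  have e1: "m (m x u) w = m z u" using z_def by (simp add: ac_simps)
  have e2: "m (m y u) w' = m z u" using zy by (simp add: ac_simps)
  have e3: "m (m u x) w = m z u" using z_def by (simp add: ac_simps)
  have e4: "m (m u y) w' = m z u" using zy by (simp add: ac_simps)
  have L: "le (m z u) (mu (m z u) (iota x (m w u) a) (iota u z b)) (mu (m z u) (iota y (m w' u) c) (iota u z b))"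
    by (rule mono1[OF ax cx bx le2])
  have R: "le (m z u) (mu (m z u) (iota u z b) (iota x (m w u) a)) (mu (m z u) (iota u z b) (iota y (m w' u) c))"
    by (rule mono2[OF bx ax cx le2])
  have ia: "iota x u a \<in> C (m x u)" "iota x u a \<in> C (m u x)" using hin[OF a, of u] by (simp_all add: commute)
  have ic: "iota y u c \<in> C (m y u)" "iota y u c \<in> C (m u y)" using hin[OF c, of u] by (simp_all add: commute)
  have ib: "iota u x b \<in> C (m x u)" "iota u x b \<in> C (m u x)" "iota u y b \<in> C (m y u)" "iota u y b \<in> C (m u y)"
    using hin[OF b, of x] hin[OF b, of y] by (simp_all add: commute)
  have "sieved_le m le iota (sieved_mu m mu iota p q) (sieved_mu m mu iota r q)"
    unfolding sieved_le_def sieved_mu_def p q r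
    apply simp
    apply (rule exI[of _ w], rule exI[of _ w'])
    using L e1 e2 i1 i2 i3 i4 hmu[OF ia(1) ib(1), of w] hmu[OF ic(1) ib(3), of w']
    by simp
  moreover have "sieved_le m le iota (sieved_mu m mu iota q p) (sieved_mu m mu iota q r)"
    unfolding sieved_le_def sieved_mu_def p q r
    apply simp
    apply (rule exI[of _ w], rule exI[of _ w'])
    using R e3 e4 i5 i6 i7 i8 hmu[OF ib(2) ia(2), of w] hmu[OF ib(4) ic(2), of w']
    by simp
  ultimately show ?thesis by blast
qed

end
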